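(* There exists an $S(3,K_4^{(3)}+e,v)$ for each $v\in\{7,11,16,26,31,32\}$.
   Context: $K_4^{(3)}+e$ denotes the 3-uniform hypergraph with vertex set $\{1,2,3,4,5\}$ and edge set $\{\{1,2,3\},\{1,2,4\},\{1,3,4\},\{2,3,4\},\{3,4,5\}\}$. An $S(3,K_4^{(3)}+e,v)$ is a collection of 3-uniform hypergraphs (blocks) on subsets of a $v$-set $X$, each isomorphic to $K_4^{(3)}+e$, whose edge sets partition the set of all 3-subsets of $X$. *)

theory Defs
  imports Main
begin

definition K4e_edges :: "nat set set" where
  "K4e_edges = {{1,2,3},{1,2,4},{1,3,4},{2,3,4},{3,4,5}}"

text \<open>A block on the ground set X: a 3-uniform hypergraph (given by its edge set)
  on a subset of X that is isomorphic to K_4^(3)+e, i.e. the image of the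
  template under an injective vertex map from {1..5} into X.  (The template has
  no isolated vertices, so the hypergraph is determined by its edge set.)\<close>
definition is_K4e_block :: "'a set \<Rightarrow> 'a set set \<Rightarrow> bool" where
  "is_K4e_block X E \<longleftrightarrow>
     (\<exists>f. inj_on f {1..5::nat} \<and> f ` {1..5} \<subseteq> X \<and> E = (\<lambda>e. f ` e) ` K4e_edges)"

definition is_S3_K4e :: "'a set \<Rightarrow> 'a set set set \<Rightarrow> bool" where
  "is_S3_K4e X \<B> \<longleftrightarrow>
     (\<forall>E\<in>\<B>. is_K4e_block X E) \<and>
     (\<forall>E1\<in>\<B>. \<forall>E2\<in>\<B>. E1 \<noteq> E2 \<longrightarrow> E1 \<inter> E2 = {}) \<and>
     \<Union>\<B> = {T. T \<subseteq> X \<and> card T = 3}"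

end

theory Submission
  imports Defs "HOL-Library.Code_Target_Nat"
begin


definition tmpl_perms :: "(nat \<times> nat \<times> nat) list" where
  "tmpl_perms = concat (map (\<lambda>(i,j,l). [(i,j,l),(i,l,j),(j,i,l),(j,l,i),(l,i,j),(l,j,i)])
     [(1,2,3),(1,2,4),(1,3,4),(2,3,4),(3,4,5)])"

fun dp :: "nat \<Rightarrow> nat list \<Rightarrow> nat \<times> nat \<times> nat \<Rightarrow> nat \<times> nat" where
  "dp n B (i,j,l) = ((B!(j-1) + n - B!(i-1)) mod n, (B!(l-1) + n - B!(i-1)) mod n)"

definition row_ok :: "nat \<Rightarrow> nat list list \<Rightarrow> nat \<Rightarrow> (nat \<times> nat) list \<Rightarrow> bool" where
  "row_ok n Bs p ws = (list_all (\<lambda>(b,t). b < length Bs \<and> t < length tmpl_perms) ws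
     \<and> map (\<lambda>(b,t). dp n (Bs!b) (tmpl_perms!t)) ws = map (\<lambda>q. (p,q)) (filter (\<lambda>q. q \<noteq> p) [1..<n]))"

definition check :: "nat \<Rightarrow> nat list list \<Rightarrow> (nat \<times> nat) list list \<Rightarrow> bool" where
  "check n Bs W = (list_all (\<lambda>B. length B = 5 \<and> distinct B \<and> list_all (\<lambda>x. x < n) B) Bs
     \<and> 5 * n * length Bs = n choose 3 \<and> length W = n - 1
     \<and> list_all (\<lambda>(p,ws). row_ok n Bs p ws) (zip [1..<n] W))"

definition blk :: "nat \<Rightarrow> nat list \<Rightarrow> nat \<Rightarrow> nat set set" where
  "blk n B k = (\<lambda>e. (\<lambda>i. (B!(i-1) + k) mod n) ` e) ` K4e_edges"

lemma tmpl_perms_edge: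
  assumes "(i,j,l) \<in> set tmpl_perms"
  shows "{i,j,l} \<in> K4e_edges" "1 \<le> i \<and> i \<le> 5" "1 \<le> j \<and> j \<le> 5" "1 \<le> l \<and> l \<le> 5"
proof -
  have "(i,j,l) \<in> set [(1,2,3),(1,3,2),(2,1,3),(2,3,1),(3,1,2),(3,2,1),
    (1,2,4),(1,4,2),(2,1,4),(2,4,1),(4,1,2),(4,2,1),
    (1,3,4),(1,4,3),(3,1,4),(3,4,1),(4,1,3),(4,3,1),
    (2,3,4),(2,4,3),(3,2,4),(3,4,2),(4,2,3),(4,3,2),
    (3,4,5),(3,5,4),(4,3,5),(4,5,3),(5,3,4),(5,4,3)]"
    using assms by (simp add: tmpl_perms_def)
  then have d: "(i,j,l) = (1,2,3) \<or> (i,j,l) = (1,3,2) \<or> (i,j,l) = (2,1,3) \<or> (i,j,l) = (2,3,1) \<or> (i,j,l) = (3,1,2) \<or> (i,j,l) = (3,2,1) \<or>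
    (i,j,l) = (1,2,4) \<or> (i,j,l) = (1,4,2) \<or> (i,j,l) = (2,1,4) \<or> (i,j,l) = (2,4,1) \<or> (i,j,l) = (4,1,2) \<or> (i,j,l) = (4,2,1) \<or>
    (i,j,l) = (1,3,4) \<or> (i,j,l) = (1,4,3) \<or> (i,j,l) = (3,1,4) \<or> (i,j,l) = (3,4,1) \<or> (i,j,l) = (4,1,3) \<or> (i,j,l) = (4,3,1) \<or>
    (i,j,l) = (2,3,4) \<or> (i,j,l) = (2,4,3) \<or> (i,j,l) = (3,2,4) \<or> (i,j,l) = (3,4,2) \<or> (i,j,l) = (4,2,3) \<or> (i,j,l) = (4,3,2) \<or>
    (i,j,l) = (3,4,5) \<or> (i,j,l) = (3,5,4) \<or> (i,j,l) = (4,3,5) \<or> (i,j,l) = (4,5,3) \<or> (i,j,l) = (5,3,4) \<or> (i,j,l) = (5,4,3)"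
    by (simp only: set_simps insert_iff empty_iff simp_thms)
  show "{i,j,l} \<in> K4e_edges"
    using d by (elim disjE; simp add: K4e_edges_def insert_commute)
  show "1 \<le> i \<and> i \<le> 5" "1 \<le> j \<and> j \<le> 5" "1 \<le> l \<and> l \<le> 5" using d by auto
qed

lemma K4e_edges_sub: "e \<in> K4e_edges \<Longrightarrow> e \<subseteq> {1..5} \<and> card e = 3"
  by (auto simp: K4e_edges_def)

lemma K4e_edges_finite: "finite K4e_edges" "card K4e_edges \<le> 5"
proof -
  have e: "K4e_edges = set [{1,2,3},{1,2,4},{1,3,4},{2,3,4},{3,4,5}]" by (simp add: K4e_edges_def)
  show "finite K4e_edges" by (simp add: e)
  show "card K4e_edges \<le> 5" unfolding e by (rule order.trans[OF card_length]) simp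
qed

lemma mod_cancel_lt:
  fixes x y k n :: nat
  assumes "x < n" "y < n" "(x + k) mod n = (y + k) mod n"
  shows "x = y"
proof (cases "x \<le> y")
  case True
  then have "n dvd (y + k) - (x + k)" using assms(3) mod_eq_dvd_iff_nat[of "x+k" "y+k" n] by simp
  then have "n dvd y - x" by simp
  moreover have "y - x < n" using assms(2) by simp
  ultimately have "\<not> 0 < y - x" using nat_dvd_not_less by blast
  then show ?thesis using True by simp
next
  case False
  then have "n dvd (x + k) - (y + k)" using assms(3) mod_eq_dvd_iff_nat[of "y+k" "x+k" n] by simp
  then have "n dvd x - y" by simp
  moreover have "x - y < n" using assms(1) by simp
  ultimately have "\<not> 0 < x - y" using nat_dvd_not_less by blast
  then show ?thesis using False by simp
qed

lemma blk_inj: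
  fixes B :: "nat list" and n k :: nat
  assumes "length B = 5" "distinct B" "\<forall>x\<in>set B. x < n"
  shows "inj_on (\<lambda>i. (B!(i-1) + k) mod n) {1..5::nat}"
proof (rule inj_onI)
  fix i j :: nat assume i: "i \<in> {1..5}" and j: "j \<in> {1..5}"
    and eq: "(B!(i-1) + k) mod n = (B!(j-1) + k) mod n"
  have il: "i - 1 < length B" "j - 1 < length B" using i j assms(1) by auto
  then have "B!(i-1) \<in> set B" "B!(j-1) \<in> set B" by (simp_all only: nth_mem)
  then have "B!(i-1) < n" "B!(j-1) < n" using assms(3) by blast+
  moreover have eq': "(B!(i-1) + k) mod n = (B!(j-1) + k) mod n" using eq by simp
  ultimately have "B!(i-1) = B!(j-1)" by (rule mod_cancel_lt)
  with il have "i - 1 = j - 1" using nth_eq_iff_index_eq[OF assms(2)] by blast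
  then show "i = j" using i j by auto
qed

lemma blk_block:
  assumes "length B = 5" "distinct B" "\<forall>x\<in>set B. x < n" "0 < n"
  shows "is_K4e_block {0..<n} (blk n B k)"
proof -
  have "(\<lambda>i. (B!(i-1) + k) mod n) ` {1..5} \<subseteq> {0..<n}" using assms(4) by auto
  then show ?thesis unfolding is_K4e_block_def blk_def
    using blk_inj[OF assms(1-3)] by blast
qed

lemma blk_sub:
  assumes "length B = 5" "distinct B" "\<forall>x\<in>set B. x < n" "0 < n" "T \<in> blk n B k"
  shows "T \<subseteq> {0..<n} \<and> card T = 3"
proof -
  from assms(5) obtain e where e: "e \<in> K4e_edges" and T: "T = (\<lambda>i. (B!(i-1) + k) mod n) ` e"
    unfolding blk_def by auto
  have "inj_on (\<lambda>i. (B!(i-1) + k) mod n) e"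
    using blk_inj[OF assms(1-3)] K4e_edges_sub[OF e] inj_on_subset by blast
  then have "card T = card e" using T card_image by blast
  then show ?thesis using K4e_edges_sub[OF e] T assms(4) by auto
qed

lemma blk_card: "card (blk n B k) \<le> 5"
proof -
  have "card (blk n B k) \<le> card K4e_edges" unfolding blk_def by (rule card_image_le[OF K4e_edges_finite(1)])
  then show ?thesis using K4e_edges_finite(2) by simp
qed

lemma modfix:
  fixes a x y n :: nat
  assumes "x < n" "a < n"
  shows "(y + (a + n - x) mod n) mod n = ((y + n - x) mod n + a) mod n"
proof -
  have "(y + (a + n - x) mod n) mod n = (y + (a + n - x)) mod n" by (simp add: mod_add_right_eq)
  also have "y + (a + n - x) = (y + n - x) + a" using assms by simp
  also have "(\<dots>) mod n = ((y + n - x) mod n + a) mod n" by (simp add: mod_add_left_eq)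
  finally show ?thesis .
qed

lemma modback:
  fixes a b n :: nat
  assumes "a < n" "b < n"
  shows "((b + n - a) mod n + a) mod n = b"
proof -
  have "((b + n - a) mod n + a) mod n = (b + n - a + a) mod n" by (simp add: mod_add_left_eq)
  also have "b + n - a + a = b + n" using assms by simp
  finally show ?thesis using assms by simp
qed

lemma modnz:
  fixes a b n :: nat
  assumes "a < n" "b < n" "a \<noteq> b"
  shows "(b + n - a) mod n \<noteq> 0"
proof
  assume "(b + n - a) mod n = 0"
  then have "((b + n - a) mod n + a) mod n = a" using assms by simp
  then show False using modback[OF assms(1,2)] assms(3) by simp
qed

lemma modinj:
  fixes a b c n :: nat
  assumes "a < n" "b < n" "c < n" "b \<noteq> c"
  shows "(b + n - a) mod n \<noteq> (c + n - a) mod n"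
  using modback[OF assms(1,2)] modback[OF assms(1,3)] assms(4) by metis

lemma sum_eq_disjoint:
  assumes "finite F" "\<forall>E\<in>F. finite E" "(\<Sum>E\<in>F. card E) = card (\<Union>F)"
    "E1 \<in> F" "E2 \<in> F" "E1 \<noteq> E2"
  shows "E1 \<inter> E2 = {}"
proof (rule ccontr)
  assume "E1 \<inter> E2 \<noteq> {}"
  then obtain t where t: "t \<in> E1" "t \<in> E2" by auto
  have fin: "finite (SIGMA E:F. E)" using assms(1,2) by auto
  have "card (SIGMA E:F. E) = (\<Sum>E\<in>F. card E)" using assms(1,2) by (simp add: card_SigmaI)
  moreover have "snd ` (SIGMA E:F. E) = \<Union>F" by force
  ultimately have "card (snd ` (SIGMA E:F. E)) = card (SIGMA E:F. E)" using assms(3) by simp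
  then have "inj_on snd (SIGMA E:F. E)" using fin eq_card_imp_inj_on by blast
  moreover have "(E1,t) \<in> (SIGMA E:F. E)" "(E2,t) \<in> (SIGMA E:F. E)" using t assms by auto
  ultimately have "(E1,t) = (E2,t)" using inj_onD[of snd _ "(E1,t)" "(E2,t)"] by simp
  then show False using assms(6) by simp
qed

lemma check_design:
  assumes "check n Bs W" "0 < n"
  shows "is_S3_K4e {0..<n} {blk n B k | B k. B \<in> set Bs \<and> k < n}"
proof -
  let ?F = "{blk n B k | B k. B \<in> set Bs \<and> k < n}"
  let ?T = "{T. T \<subseteq> {0..<n} \<and> card T = 3}"
  have bs: "\<And>B. B \<in> set Bs \<Longrightarrow> length B = 5 \<and> distinct B \<and> (\<forall>x\<in>set B. x < n)"
    using assms(1) unfolding check_def by (auto simp: list_all_iff)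
  have cnt: "5 * n * length Bs = n choose 3" using assms(1) unfolding check_def by auto
  have cov: "\<And>p q. 1 \<le> p \<Longrightarrow> p < n \<Longrightarrow> 1 \<le> q \<Longrightarrow> q < n \<Longrightarrow> p \<noteq> q \<Longrightarrow>
      \<exists>B\<in>set Bs. \<exists>ijl\<in>set tmpl_perms. (p,q) = dp n B ijl"
  proof -
    fix p q :: nat assume pq: "1 \<le> p" "p < n" "1 \<le> q" "q < n" "p \<noteq> q"
    have lw: "length W = n - 1" using assms(1) unfolding check_def by simp
    have "(p, W!(p-1)) = zip [1..<n] W ! (p-1)" using pq lw by simp
    moreover have "p - 1 < length (zip [1..<n] W)" using pq lw by simp
    ultimately have "(p, W!(p-1)) \<in> set (zip [1..<n] W)" by (metis nth_mem)
    then have r: "row_ok n Bs p (W!(p-1))" using assms(1) unfolding check_def list_all_iff by fastforce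
    have "(p,q) \<in> set (map (\<lambda>q. (p,q)) (filter (\<lambda>q. q \<noteq> p) [1..<n]))" using pq by auto
    then have "(p,q) \<in> set (map (\<lambda>(b,t). dp n (Bs!b) (tmpl_perms!t)) (W!(p-1)))"
      using r unfolding row_ok_def by metis
    then obtain b t where m: "(b,t) \<in> set (W!(p-1))" and e: "(p,q) = dp n (Bs!b) (tmpl_perms!t)" by auto
    have "b < length Bs \<and> t < length tmpl_perms" using m r unfolding row_ok_def list_all_iff by fastforce
    then have "Bs!b \<in> set Bs" "tmpl_perms!t \<in> set tmpl_perms" by (simp_all only: nth_mem)
    then show "\<exists>B\<in>set Bs. \<exists>ijl\<in>set tmpl_perms. (p,q) = dp n B ijl" using e by blast
  qed
  have blocks: "\<forall>E\<in>?F. is_K4e_block {0..<n} E" using bs blk_block assms(2) by blast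
  have sub1: "\<Union>?F \<subseteq> ?T" using bs blk_sub assms(2) by blast
  have sub2: "?T \<subseteq> \<Union>?F"
  proof
    fix T assume "T \<in> ?T"
    then have TX: "T \<subseteq> {0..<n}" and c3: "card T = 3" by auto
    then obtain a b c where T: "T = {a,b,c}" and d: "a \<noteq> b" "b \<noteq> c" "a \<noteq> c"
      by (auto simp: card_3_iff)
    have abc: "a < n" "b < n" "c < n" using TX T by auto
    define p where "p = (b + n - a) mod n"
    define q where "q = (c + n - a) mod n"
    have "p \<noteq> 0" "q \<noteq> 0" "p \<noteq> q" "p < n" "q < n"
      unfolding p_def q_def using modnz modinj abc d assms(2) by auto
    then obtain B ijl where B: "B \<in> set Bs" and ijl0: "ijl \<in> set tmpl_perms" and e: "(p,q) = dp n B ijl"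
      using cov by (metis One_nat_def Suc_leI neq0_conv)
    obtain i j l where ijl1: "ijl = (i,j,l)" by (cases ijl) auto
    have ijl: "(i,j,l) \<in> set tmpl_perms" using ijl0 ijl1 by simp
    have pq: "p = (B!(j-1) + n - B!(i-1)) mod n" "q = (B!(l-1) + n - B!(i-1)) mod n"
      using e ijl1 by simp_all
    have ijl5: "i - 1 < 5" "j - 1 < 5" "l - 1 < 5" using tmpl_perms_edge[OF ijl] by auto
    have Bn: "B!(i-1) < n" "B!(j-1) < n" "B!(l-1) < n" using bs[OF B] ijl5 by auto
    define k where "k = (a + n - B!(i-1)) mod n"
    have ga: "(B!(i-1) + k) mod n = a" unfolding k_def using modfix[OF Bn(1) abc(1), of "B!(i-1)"] modback[OF Bn(1) abc(1)] abc(1) by simp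
    have gb: "(B!(j-1) + k) mod n = b"
      unfolding k_def using modfix[OF Bn(1) abc(1), of "B!(j-1)"] pq(1) p_def modback[OF abc(1) abc(2)] by simp
    have gc: "(B!(l-1) + k) mod n = c"
      unfolding k_def using modfix[OF Bn(1) abc(1), of "B!(l-1)"] pq(2) q_def modback[OF abc(1) abc(3)] by simp
    have "T = (\<lambda>x. (B!(x-1) + k) mod n) ` {i,j,l}" using T ga gb gc by auto
    then have "T \<in> blk n B k" unfolding blk_def using tmpl_perms_edge(1)[OF ijl] by blast
    moreover have "k < n" unfolding k_def using assms(2) by simp
    ultimately show "T \<in> \<Union>?F" using B by blast
  qed
  have U: "\<Union>?F = ?T" using sub1 sub2 by blast
  have Feq: "?F = (\<lambda>(B,k). blk n B k) ` (set Bs \<times> {0..<n})" by force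
  have finF: "finite ?F" using Feq by simp
  have cardF: "card ?F \<le> n * length Bs"
  proof -
    from Feq have "card ?F \<le> card (set Bs \<times> {0..<n})"
      using card_image_le[of "set Bs \<times> {0..<n}" "\<lambda>(B,k). blk n B k"] by (simp only: finite_SigmaI finite_set finite_atLeastLessThan)
    also have "\<dots> = card (set Bs) * n" by (simp add: card_cartesian_product)
    also have "\<dots> \<le> length Bs * n" by (simp add: card_length)
    finally show ?thesis by (simp add: mult.commute)
  qed
  have finE: "\<forall>E\<in>?F. finite E" unfolding blk_def using K4e_edges_finite by auto
  have cardT: "card ?T = n choose 3"
    using n_subsets[of "{0..<n}" 3] by simp
  have "card (\<Union>?F) \<le> (\<Sum>E\<in>?F. card E)" using card_Union_le_sum_card finE by blast
  moreover have "(\<Sum>E\<in>?F. card E) \<le> (\<Sum>E\<in>?F. 5)" using blk_card by (intro sum_mono) auto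
  moreover have "(\<Sum>E\<in>?F. (5::nat)) \<le> 5 * (n * length Bs)" using cardF by simp
  ultimately have eq: "(\<Sum>E\<in>?F. card E) = card (\<Union>?F)" using U cardT cnt by (simp add: mult.assoc)
  have disj: "\<forall>E1\<in>?F. \<forall>E2\<in>?F. E1 \<noteq> E2 \<longrightarrow> E1 \<inter> E2 = {}"
    using sum_eq_disjoint[OF finF finE eq] by blast
  show ?thesis unfolding is_S3_K4e_def using blocks disj U by blast
qed

lemma exists_from_check:
  assumes "check n Bs W" "0 < n"
  shows "\<exists>(X :: nat set) \<B>. finite X \<and> card X = n \<and> is_S3_K4e X \<B>"
  using check_design[OF assms] by (intro exI[of _ "{0..<n}"]) auto


lemma check_7: "check 7 [[0, 1, 2, 4, 5]] [[(0,0),(0,18),(0,6),(0,27),(0,3)],[(0,1),(0,24),(0,12),(0,15),(0,21)],[(0,19),(0,25),(0,10),(0,16),(0,9)],[(0,7),(0,13),(0,11),(0,22),(0,28)],[(0,26),(0,14),(0,17),(0,23),(0,4)],[(0,2),(0,20),(0,8),(0,29),(0,5)]]"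
  by code_simp

lemma check_11: "check 11 [[0, 1, 8, 10, 5], [0, 2, 6, 7, 10], [0, 1, 3, 6, 10]] [[(0,10),(2,0),(1,24),(1,15),(2,6),(1,21),(0,0),(0,16),(0,6)],[(0,11),(0,15),(0,21),(2,18),(1,0),(1,6),(0,24),(0,22),(2,3)],[(2,1),(0,14),(0,4),(0,28),(2,12),(2,24),(2,15),(2,21),(1,27)],[(1,25),(0,20),(0,5),(1,18),(1,10),(2,28),(2,27),(1,3),(1,16)],[(1,14),(2,19),(0,29),(1,19),(2,10),(1,4),(2,16),(1,9),(2,9)],[(2,7),(1,1),(2,13),(1,11),(2,11),(1,12),(2,22),(0,27),(1,22)],[(1,20),(1,7),(2,25),(2,29),(1,5),(1,13),(1,28),(0,18),(0,3)],[(0,1),(0,25),(2,14),(2,26),(2,17),(2,23),(1,29),(2,4),(0,12)],[(0,17),(0,23),(2,20),(1,2),(1,8),(0,26),(0,19),(2,5),(0,9)],[(0,7),(2,2),(1,26),(1,17),(2,8),(1,23),(0,2),(0,13),(0,8)]]"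
  by code_simp

lemma check_16: "check 16 [[0, 6, 11, 13, 12], [0, 2, 13, 14, 10], [0, 1, 8, 10, 15], [0, 8, 5, 15, 3], [0, 3, 8, 12, 13], [0, 1, 4, 14, 6], [0, 1, 7, 11, 4]] [[(0,25),(1,15),(5,0),(1,21),(3,16),(6,0),(2,0),(3,10),(2,6),(6,6),(4,27),(1,24),(5,6),(0,29)],[(0,24),(5,10),(1,10),(0,15),(5,16),(2,24),(2,15),(2,21),(5,25),(0,21),(3,28),(1,0),(1,6),(1,16)],[(1,14),(5,11),(1,28),(1,4),(5,22),(6,28),(4,0),(0,10),(3,20),(3,5),(4,6),(5,18),(0,16),(5,3)],[(5,1),(1,11),(1,29),(4,24),(3,27),(4,10),(4,15),(6,15),(6,21),(4,21),(4,16),(6,24),(5,12),(1,22)],[(1,20),(0,14),(1,5),(4,25),(6,10),(0,18),(3,1),(4,18),(0,3),(0,4),(6,16),(4,3),(2,27),(3,12)],[(3,17),(5,17),(5,23),(3,26),(6,11),(2,10),(5,26),(3,23),(6,18),(0,0),(6,22),(0,6),(2,16),(6,3)],[(6,1),(2,25),(6,29),(4,11),(0,19),(2,11),(3,9),(2,18),(0,9),(6,12),(4,22),(3,19),(2,22),(2,3)],[(2,1),(2,14),(4,1),(4,14),(3,0),(5,27),(3,8),(2,4),(2,12),(4,4),(4,12),(3,2),(5,29),(3,6)],[(3,11),(2,20),(0,11),(6,14),(4,19),(3,22),(2,19),(2,5),(6,4),(2,28),(6,27),(4,9),(0,22),(2,9)],[(2,7),(5,24),(3,21),(6,20),(0,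2),(6,19),(0,8),(2,13),(6,5),(3,15),(5,15),(5,21),(3,24),(6,9)],[(6,7),(0,20),(3,4),(4,20),(0,5),(0,1),(6,13),(4,5),(2,29),(3,14),(1,18),(0,12),(1,3),(4,28)],[(4,26),(3,29),(4,7),(4,17),(6,17),(6,23),(4,23),(4,13),(6,26),(5,14),(1,19),(5,4),(1,9),(1,27)],[(1,25),(1,1),(5,19),(6,25),(4,2),(0,7),(3,18),(3,3),(4,8),(5,20),(0,13),(5,5),(1,12),(5,9)],[(5,7),(1,7),(0,17),(5,13),(2,26),(2,17),(2,23),(5,28),(0,23),(3,25),(1,2),(1,8),(1,13),(0,26)],[(0,28),(1,17),(5,2),(1,23),(3,13),(6,2),(2,2),(3,7),(2,8),(6,8),(4,29),(1,26),(5,8),(0,27)]]"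
  by code_simp

lemma check_26: "check 26 [[0, 1, 5, 9, 23], [0, 4, 2, 20, 9], [0, 8, 16, 19, 10], [0, 9, 12, 17, 14], [0, 5, 8, 21, 7], [0, 6, 12, 24, 7], [0, 3, 7, 19, 11], [0, 13, 1, 8, 12], [0, 1, 2, 19, 9], [0, 2, 9, 23, 8], [0, 3, 11, 23, 13], [0, 4, 3, 13, 5], [0, 5, 15, 16, 19], [0, 5, 11, 22, 25], [0, 6, 13, 22, 23], [0, 12, 10, 16, 25], [0, 5, 6, 25, 12], [0, 11, 4, 6, 7], [0, 11, 2, 13, 1], [0, 5, 4, 7, 13]] [[(8,0),(19,20),(12,24),(0,0),(16,10),(16,16),(7,12),(0,6),(11,20),(12,15),(18,28),(7,1),(4,28),(9,28),(12,21),(14,27),(8,18),(8,6),(16,18),(16,3),(19,5),(11,5),(17,27),(8,3)],[(8,1),(17,24),(1,1),(3,25),(15,20),(17,21),(5,10),(9,0),(11,25),(18,1),(10,25),(18,12),(5,16),(18,9),(15,5),(18,19),(1,20),(8,12),(1,12),(19,9),(17,15),(9,6),(1,5),(19,19)],[(19,21),(17,25),(11,1),(9,10),(10,10),(6,0),(3,18),(19,24),(2,15),(10,0),(9,16),(11,12),(10,16),(13,27),(4,18),(3,3),(2,21),(6,6),(2,24),(4,3),(19,15),(10,6),(3,29),(12,27)],[(12,25),(1,0),(11,0),(19,1),(17,12),(19,12),(0,18),(13,10),(14,10),(17,1),(6,25),(11,6),(15,9),(13,16),(6,18),(14,16),(0,24),(7,27),(1,6),(0,15),(0,21),(6,3)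,(15,19),(0,3)],[(0,1),(3,24),(9,11),(19,0),(16,0),(19,6),(4,0),(0,12),(4,10),(13,0),(9,22),(4,16),(3,15),(12,0),(12,6),(5,28),(7,11),(7,22),(17,11),(4,6),(13,6),(3,21),(17,22),(16,6)],[(16,11),(15,21),(10,11),(17,13),(16,1),(16,22),(1,16),(2,28),(1,10),(17,7),(5,0),(14,0),(10,22),(15,24),(15,15),(13,18),(5,18),(16,25),(5,3),(13,3),(14,6),(19,27),(5,6),(16,12)],[(16,17),(17,20),(6,1),(19,13),(19,7),(16,23),(8,10),(8,16),(6,10),(7,24),(7,21),(16,26),(6,16),(2,10),(14,18),(8,25),(1,25),(6,12),(14,3),(9,18),(17,5),(2,16),(9,3),(7,15)],[(7,13),(5,11),(3,19),(0,19),(4,1),(1,17),(8,11),(8,22),(1,23),(2,18),(0,28),(7,7),(5,22),(1,26),(2,0),(3,9),(2,3),(2,6),(10,18),(4,12),(6,29),(10,3),(11,29),(0,9)],[(0,7),(9,1),(19,25),(13,11),(0,13),(2,29),(8,17),(8,23),(14,24),(18,20),(3,0),(14,15),(5,27),(13,22),(8,26),(3,6),(3,10),(14,21),(15,27),(3,16),(11,9),(9,12),(18,5),(11,19)],[(11,21),(11,24),(2,14),(14,11),(4,11),(1,11),(6,11),(1,22),(14,25),(12,18),(15,1),(4,22),(6,22),(12,10),(15,12),(14,22),(2,4),(8,29),(15,16),(12,3),(15,10),(11,15),(10,29),(12,16)],[(12,14),(18,0),(10,1),(17,0),(13,1),(17,6),(7,25),(2,19),(18,21),(12,19),(9,27)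,(18,6),(13,24),(13,15),(12,4),(15,28),(2,9),(1,29),(13,21),(12,9),(13,12),(10,12),(18,15),(18,24)],[(18,29),(10,24),(9,17),(6,24),(9,23),(5,1),(7,20),(0,29),(3,1),(15,0),(9,26),(4,27),(5,15),(10,15),(15,6),(3,12),(10,21),(6,15),(5,21),(5,24),(6,21),(13,28),(5,12),(7,5)],[(7,0),(18,13),(11,13),(11,7),(4,17),(14,1),(16,27),(7,6),(14,14),(4,23),(18,7),(4,26),(7,2),(18,16),(11,16),(11,10),(4,15),(14,4),(16,29),(7,8),(14,12),(4,21),(18,10),(4,24)],[(4,29),(5,17),(10,17),(15,8),(3,14),(10,23),(6,17),(5,23),(5,26),(6,23),(13,25),(5,14),(7,3),(18,27),(10,26),(9,15),(6,26),(9,21),(5,4),(7,18),(0,27),(3,4),(15,2),(9,24)],[(9,29),(18,8),(13,26),(13,17),(12,1),(15,25),(2,11),(1,27),(13,23),(12,11),(13,14),(10,14),(18,17),(18,26),(12,12),(18,2),(10,4),(17,2),(13,4),(17,8),(7,28),(2,22),(18,23),(12,22)],[(12,20),(15,4),(4,19),(6,19),(12,7),(15,14),(14,19),(2,1),(8,27),(15,13),(12,5),(15,7),(11,17),(10,27),(12,13),(11,23),(11,26),(2,12),(14,9),(4,9),(1,9),(6,9),(1,19),(14,28)],[(14,26),(18,18),(3,2),(14,17),(5,29),(13,19),(8,24),(3,8),(3,7),(14,23),(15,29),(3,13),(11,11),(9,14),(18,3),(11,22),(0,10),(9,4),(19,28),(13,9),(0,16),(2,27),(8,15),(8,21)],[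(8,19),(1,21),(2,20),(0,25),(7,10),(5,19),(1,24),(2,2),(3,11),(2,5),(2,8),(10,20),(4,14),(6,27),(10,5),(11,27),(0,11),(7,16),(5,9),(3,22),(0,22),(4,4),(1,15),(8,9)],[(8,7),(8,13),(6,7),(7,26),(7,23),(16,24),(6,13),(2,7),(14,20),(8,28),(1,28),(6,14),(14,5),(9,20),(17,3),(2,13),(9,5),(7,17),(16,15),(17,18),(6,4),(19,16),(19,10),(16,21)],[(16,19),(1,13),(2,25),(1,7),(17,10),(5,2),(14,2),(10,19),(15,26),(15,17),(13,20),(5,20),(16,28),(5,5),(13,5),(14,8),(19,29),(5,8),(16,14),(16,9),(15,23),(10,9),(17,16),(16,4)],[(16,2),(19,8),(4,2),(0,14),(4,7),(13,2),(9,19),(4,13),(3,17),(12,2),(12,8),(5,25),(7,9),(7,19),(17,9),(4,8),(13,8),(3,23),(17,19),(16,8),(0,4),(3,26),(9,9),(19,2)],[(19,4),(17,14),(19,14),(0,20),(13,7),(14,7),(17,4),(6,28),(11,8),(15,11),(13,13),(6,20),(14,13),(0,26),(7,29),(1,8),(0,17),(0,23),(6,5),(15,22),(0,5),(12,28),(1,2),(11,2)],[(11,4),(9,7),(10,7),(6,2),(3,20),(19,26),(2,17),(10,2),(9,13),(11,14),(10,13),(13,29),(4,20),(3,5),(2,23),(6,8),(2,26),(4,5),(19,17),(10,8),(3,27),(12,29),(19,23),(17,28)],[(17,26),(1,4),(3,28),(15,18),(17,23),(5,7),(9,2),(11,28),(18,4),(10,28),(18,14),(5,13),(18,11),(15,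3),(18,22),(1,18),(8,14),(1,14),(19,11),(17,17),(9,8),(1,3),(19,22),(8,4)],[(8,2),(19,18),(12,26),(0,2),(16,7),(16,13),(7,14),(0,8),(11,18),(12,17),(18,25),(7,4),(4,25),(9,25),(12,23),(14,29),(8,20),(8,8),(16,20),(16,5),(19,3),(11,3),(17,29),(8,5)]]"
  by code_simp

lemma check_31: "check 31 [[0, 12, 1, 17, 19], [0, 6, 15, 17, 26], [0, 15, 22, 24, 5], [0, 15, 4, 16, 14], [0, 1, 3, 18, 6], [0, 11, 18, 22, 6], [0, 2, 3, 8, 18], [0, 2, 1, 28, 30], [0, 8, 1, 7, 28], [0, 5, 8, 12, 28], [0, 14, 10, 18, 30], [0, 1, 13, 15, 9], [0, 11, 3, 29, 25], [0, 6, 8, 16, 22], [0, 3, 6, 19, 16], [0, 14, 1, 22, 20], [0, 6, 5, 14, 24], [0, 14, 7, 17, 18], [0, 5, 21, 29, 9], [0, 12, 6, 24, 11], [0, 11, 6, 13, 21], [0, 1, 10, 19, 24], [0, 12, 4, 26, 10], [0, 3, 9, 12, 5], [0, 10, 3, 30, 28], [0, 10, 6, 20, 2], [0, 4, 22, 30, 2], [0, 10, 5, 16, 2], [0, 3, 13, 20, 25]] [[(7,1),(4,0),(24,16),(26,10),(6,18),(8,12),(8,1),(16,20),(21,0),(24,10),(0,1),(11,0),(15,1),(11,6),(3,9),(0,12),(4,6),(21,6),(3,19),(17,27),(15,12),(26,16),(8,11),(8,22),(16,5),(7,20),(7,12),(6,3),(7,5)],[(7,0),(6,0),(7,27),(1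2,16),(24,29),(18,10),(6,6),(2,15),(13,18),(1,24),(15,29),(12,10),(2,24),(0,27),(1,15),(4,18),(11,15),(11,21),(20,9),(3,29),(1,21),(18,16),(2,21),(13,3),(20,19),(11,24),(7,6),(7,28),(4,3)],[(4,1),(6,1),(7,16),(7,10),(14,0),(9,18),(6,12),(23,0),(24,1),(12,1),(23,6),(28,0),(27,28),(4,25),(14,18),(17,9),(4,12),(14,6),(28,6),(14,29),(23,15),(26,27),(17,19),(23,21),(9,3),(23,24),(14,3),(12,12),(24,12)],[(24,17),(7,26),(7,17),(7,23),(11,28),(23,28),(10,20),(12,29),(8,28),(24,23),(22,1),(5,15),(25,20),(3,1),(3,12),(10,9),(25,28),(5,24),(9,24),(10,5),(26,0),(9,15),(5,21),(25,5),(22,12),(10,19),(9,21),(24,26),(26,6)],[(26,11),(12,17),(7,11),(7,22),(16,1),(20,20),(9,0),(22,16),(27,1),(27,20),(9,6),(12,23),(16,12),(6,24),(27,12),(22,10),(19,25),(0,9),(0,19),(18,0),(21,27),(26,22),(28,27),(20,5),(27,5),(12,26),(6,15),(18,6),(6,21)],[(6,19),(24,28),(14,1),(11,29),(16,0),(8,21),(13,0),(23,18),(25,1),(20,1),(19,1),(20,12),(16,6),(1,0),(13,6),(1,6),(19,20),(14,12),(25,12),(27,9),(22,25),(13,27),(19,12),(19,5),(27,19),(8,24),(23,3),(6,9),(8,15)],[(8,13),(18,11),(9,19),(23,29),(20,21),(8,20),(8,7),(2,18),(17,20),(5,18),(28,24),(19,16),(17,1),(20,24),(2,3),(17,12),(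28,15),(19,10),(5,3),(28,21),(2,10),(18,22),(17,5),(20,15),(9,9),(24,20),(24,5),(2,16),(8,5)],[(8,0),(6,7),(6,13),(10,21),(9,1),(13,1),(8,6),(26,15),(18,15),(26,24),(9,12),(26,21),(13,24),(18,21),(13,12),(15,9),(15,19),(18,24),(10,24),(10,15),(22,20),(13,15),(20,27),(16,9),(12,20),(22,5),(12,5),(13,21),(16,19)],[(16,21),(2,14),(23,1),(12,28),(22,17),(23,19),(2,19),(26,14),(15,16),(1,18),(23,12),(26,4),(21,24),(22,26),(2,9),(22,23),(21,18),(16,24),(5,10),(21,15),(21,21),(15,10),(2,4),(1,3),(16,15),(5,16),(23,9),(1,27),(21,3)],[(21,1),(13,19),(24,0),(8,29),(27,0),(25,0),(17,21),(18,14),(15,17),(17,24),(3,25),(14,25),(10,1),(18,4),(27,6),(28,18),(10,12),(21,12),(25,6),(25,9),(16,27),(15,23),(17,15),(13,9),(6,27),(25,19),(28,3),(15,26),(24,6)],[(24,11),(1,25),(12,0),(24,22),(27,21),(20,0),(5,19),(26,25),(1,19),(17,25),(3,20),(20,6),(28,10),(9,28),(0,20),(25,16),(5,0),(10,28),(5,9),(25,10),(5,6),(18,27),(28,16),(1,9),(27,15),(3,5),(27,24),(12,6),(0,5)],[(0,0),(15,28),(23,7),(22,0),(9,7),(19,0),(28,25),(9,13),(23,13),(3,24),(3,21),(21,10),(11,18),(14,10),(5,28),(0,6),(14,16),(19,9),(18,28),(16,28),(21,16),(10,27),(19,6),(19,19),(22,6),(3,15),(4,29),(2,27),(11,3)]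,[(11,1),(12,11),(28,1),(5,14),(12,22),(20,13),(19,17),(26,20),(26,5),(14,24),(20,7),(21,11),(4,10),(11,12),(4,16),(25,27),(19,26),(19,23),(28,12),(15,20),(21,22),(10,16),(5,4),(14,15),(19,29),(10,10),(14,21),(0,28),(15,5)],[(15,0),(2,25),(27,29),(25,21),(16,13),(16,7),(17,0),(13,25),(21,25),(10,0),(28,11),(11,19),(4,11),(0,16),(4,22),(17,6),(10,6),(22,9),(1,10),(17,16),(15,6),(22,19),(28,22),(25,15),(0,10),(25,24),(17,10),(1,16),(11,9)],[(11,7),(0,26),(4,24),(3,0),(6,25),(1,1),(20,25),(18,20),(22,27),(18,5),(9,29),(14,11),(11,13),(0,17),(3,6),(1,12),(14,22),(3,16),(27,16),(13,10),(2,0),(13,16),(2,6),(27,10),(0,23),(5,27),(4,15),(4,21),(3,10)],[(3,8),(1,14),(14,19),(3,13),(27,13),(13,7),(2,2),(13,13),(2,8),(27,7),(0,21),(5,29),(4,17),(4,23),(3,7),(11,10),(0,24),(4,26),(3,2),(6,28),(1,4),(20,28),(18,18),(22,29),(18,3),(9,27),(14,9),(11,16),(0,15)],[(0,13),(4,19),(17,8),(10,8),(22,11),(1,7),(17,13),(15,8),(22,22),(28,19),(25,17),(0,7),(25,26),(17,7),(1,13),(11,11),(15,2),(2,28),(27,27),(25,23),(16,16),(16,10),(17,2),(13,28),(21,28),(10,2),(28,9),(11,22),(4,9)],[(4,7),(11,14),(4,13),(25,29),(19,24),(19,21),(28,14),(15,18),(21,19),(10,13),(5,1),(14,17),(19,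27),(10,7),(14,23),(0,25),(15,3),(11,4),(12,9),(28,4),(5,12),(12,19),(20,16),(19,15),(26,18),(26,3),(14,26),(20,10),(21,9)],[(21,7),(11,20),(14,7),(5,25),(0,8),(14,13),(19,11),(18,25),(16,25),(21,13),(10,29),(19,8),(19,22),(22,8),(3,17),(4,27),(2,29),(11,5),(0,2),(15,25),(23,10),(22,2),(9,10),(19,2),(28,28),(9,16),(23,16),(3,26),(3,23)],[(3,18),(20,8),(28,7),(9,25),(0,18),(25,13),(5,2),(10,25),(5,11),(25,7),(5,8),(18,29),(28,13),(1,11),(27,17),(3,3),(27,26),(12,8),(0,3),(24,9),(1,28),(12,2),(24,19),(27,23),(20,2),(5,22),(26,28),(1,22),(17,28)],[(17,26),(3,28),(14,28),(10,4),(18,1),(27,8),(28,20),(10,14),(21,14),(25,8),(25,11),(16,29),(15,21),(17,17),(13,11),(6,29),(25,22),(28,5),(15,24),(24,8),(21,4),(13,22),(24,2),(8,27),(27,2),(25,2),(17,23),(18,12),(15,15)],[(15,13),(1,20),(23,14),(26,1),(21,26),(22,24),(2,11),(22,21),(21,20),(16,26),(5,7),(21,17),(21,23),(15,7),(2,1),(1,5),(16,17),(5,13),(23,11),(1,29),(21,5),(16,23),(2,12),(23,4),(12,25),(22,15),(23,22),(2,22),(26,12)],[(26,17),(18,17),(26,26),(9,14),(26,23),(13,26),(18,23),(13,14),(15,11),(15,22),(18,26),(10,26),(10,17),(22,18),(13,17),(20,29),(16,11),(12,18),(22,3),(12,3),(13,23),(16,22),(8,2),(6,10),(6,16),(10,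23),(9,4),(13,4),(8,8)],[(8,10),(2,20),(17,18),(5,20),(28,26),(19,13),(17,4),(20,26),(2,5),(17,14),(28,17),(19,7),(5,5),(28,23),(2,7),(18,19),(17,3),(20,17),(9,11),(24,18),(24,3),(2,13),(8,3),(8,16),(18,9),(9,22),(23,27),(20,23),(8,18)],[(8,23),(13,2),(23,20),(25,4),(20,4),(19,4),(20,14),(16,8),(1,2),(13,8),(1,8),(19,18),(14,14),(25,14),(27,11),(22,28),(13,29),(19,14),(19,3),(27,22),(8,26),(23,5),(6,11),(8,17),(6,22),(24,25),(14,4),(11,27),(16,2)],[(16,4),(20,18),(9,2),(22,13),(27,4),(27,18),(9,8),(12,21),(16,14),(6,26),(27,14),(22,7),(19,28),(0,11),(0,22),(18,2),(21,29),(26,19),(28,29),(20,3),(27,3),(12,24),(6,17),(18,8),(6,23),(26,9),(12,15),(7,9),(7,19)],[(7,21),(11,25),(23,25),(10,18),(12,27),(8,25),(24,21),(22,4),(5,17),(25,18),(3,4),(3,14),(10,11),(25,25),(5,26),(9,26),(10,3),(26,2),(9,17),(5,23),(25,3),(22,14),(10,22),(9,23),(24,24),(26,8),(24,15),(7,24),(7,15)],[(7,13),(7,7),(14,2),(9,20),(6,14),(23,2),(24,4),(12,4),(23,8),(28,2),(27,25),(4,28),(14,20),(17,11),(4,14),(14,8),(28,8),(14,27),(23,17),(26,29),(17,22),(23,23),(9,5),(23,26),(14,5),(12,14),(24,14),(4,4),(6,4)],[(6,2),(7,29),(12,13),(24,27),(18,7),(6,8),(2,17),(13,20),(1,26),(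15,27),(12,7),(2,26),(0,29),(1,17),(4,20),(11,17),(11,23),(20,11),(3,27),(1,23),(18,13),(2,23),(13,5),(20,22),(11,26),(7,8),(7,25),(4,5),(7,2)],[(7,4),(4,2),(24,13),(26,7),(6,20),(8,14),(8,4),(16,18),(21,2),(24,7),(0,4),(11,2),(15,4),(11,8),(3,11),(0,14),(4,8),(21,8),(3,22),(17,29),(15,14),(26,13),(8,9),(8,19),(16,3),(7,18),(7,14),(6,5),(7,3)]]"
  by code_simp

lemma check_32: "check 32 [[0, 6, 25, 26, 23], [0, 4, 6, 20, 29], [0, 15, 5, 23, 3], [0, 3, 5, 29, 30], [0, 2, 18, 25, 20], [0, 11, 1, 12, 5], [0, 15, 3, 10, 21], [0, 4, 21, 28, 12], [0, 1, 14, 18, 6], [0, 1, 17, 25, 13], [0, 11, 22, 29, 17], [0, 8, 13, 29, 3], [0, 6, 15, 19, 31], [0, 8, 5, 14, 2], [0, 13, 3, 23, 11], [0, 15, 1, 20, 24], [0, 1, 23, 31, 10], [0, 12, 15, 30, 10], [0, 11, 28, 30, 6], [0, 13, 18, 24, 25], [0, 3, 26, 31, 28], [0, 10, 25, 28, 26], [0, 13, 15, 25, 29], [0, 9, 1, 19, 7], [0, 5, 13, 16, 17], [0, 8, 2, 23, 5], [0, 2, 6, 11, 7], [0, 4, 5, 10, 12], [0, 16, 1, 10, 21], [0, 3, 22, 28, 7], [0, 2, 9, 21, 19]] [[(16,10),(21,25),(20,10),(26,25),(27,18),(0,15),(3,27),(23,1),(28,12),(5,1),(5,12),(0,21),(8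,0),(15,1),(28,1),(9,0),(8,6),(23,12),(15,12),(5,9),(5,19),(16,0),(16,16),(9,6),(19,27),(20,16),(27,3),(24,27),(0,24),(16,6)],[(16,11),(0,28),(18,15),(20,25),(26,0),(4,25),(25,1),(30,0),(18,24),(26,6),(22,18),(18,10),(17,10),(18,21),(1,18),(17,16),(4,0),(22,3),(2,28),(30,6),(30,29),(25,12),(16,22),(4,6),(3,18),(27,27),(1,3),(3,3),(18,16),(21,29)],[(21,24),(0,29),(24,24),(3,0),(3,10),(21,15),(3,16),(13,20),(6,12),(11,10),(13,28),(14,1),(10,10),(6,1),(11,16),(21,21),(17,18),(24,15),(17,3),(25,25),(29,0),(14,12),(24,21),(10,16),(20,0),(13,5),(29,6),(3,6),(20,29),(20,6)],[(20,11),(18,14),(24,25),(27,0),(1,0),(29,10),(7,10),(26,18),(27,6),(5,25),(9,28),(15,27),(21,10),(18,4),(12,24),(12,15),(8,15),(8,21),(1,6),(7,0),(22,27),(12,21),(8,24),(7,16),(29,16),(20,22),(7,6),(21,16),(26,3),(26,29)],[(26,24),(20,24),(3,1),(27,1),(20,15),(27,24),(13,1),(20,21),(27,12),(19,18),(10,28),(24,0),(13,12),(2,1),(24,6),(15,9),(15,19),(19,3),(17,28),(11,18),(6,11),(2,12),(11,3),(6,22),(26,15),(27,15),(26,21),(3,12),(4,29),(27,21)],[(27,19),(26,1),(3,11),(1,1),(20,14),(19,24),(3,22),(20,4),(29,15),(26,12),(0,10),(29,21),(19,15),(12,0),(11,27),(29,24),(23,25),(12,6),(1,12),(25,20),(2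8,11),(28,22),(13,9),(0,0),(0,6),(19,21),(27,9),(13,19),(25,5),(0,16)],[(0,14),(4,24),(21,14),(29,11),(27,25),(19,25),(9,10),(4,10),(10,15),(7,15),(6,21),(0,4),(4,15),(7,21),(4,21),(21,4),(6,24),(30,18),(22,10),(10,21),(22,16),(7,24),(9,16),(4,16),(29,22),(10,24),(5,29),(6,15),(30,3),(3,28)],[(3,26),(25,0),(3,17),(7,11),(13,0),(3,23),(9,11),(16,15),(16,21),(24,18),(8,28),(11,0),(13,6),(9,15),(9,21),(2,9),(23,20),(16,24),(14,25),(19,10),(2,19),(25,6),(9,22),(7,22),(19,16),(24,3),(9,24),(11,6),(18,27),(23,5)],[(23,0),(30,1),(13,21),(26,19),(20,20),(20,5),(4,11),(16,14),(16,4),(25,16),(14,16),(12,18),(2,16),(28,21),(7,28),(25,10),(1,27),(23,6),(28,24),(30,12),(14,10),(1,28),(2,10),(4,22),(12,3),(13,15),(15,28),(13,24),(26,9),(28,15)],[(28,13),(18,25),(6,13),(27,7),(27,13),(29,14),(10,14),(16,20),(16,5),(5,20),(30,25),(29,4),(22,24),(6,7),(28,7),(22,15),(2,20),(14,9),(14,20),(10,4),(14,19),(23,9),(23,19),(21,0),(11,28),(2,5),(21,6),(14,5),(22,21),(5,5)],[(5,0),(26,7),(11,11),(5,24),(19,19),(26,13),(7,14),(24,19),(25,17),(5,21),(5,6),(30,10),(25,26),(7,4),(11,22),(25,23),(10,18),(19,9),(30,16),(10,3),(10,0),(28,27),(16,27),(6,27),(29,27),(24,9),(18,0),(10,6),(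18,6),(5,15)],[(5,13),(22,19),(13,29),(9,29),(10,29),(0,11),(6,20),(8,29),(14,17),(30,24),(5,7),(15,16),(2,27),(17,0),(1,10),(17,27),(1,16),(22,9),(14,26),(28,28),(14,23),(30,15),(14,29),(30,21),(23,29),(15,10),(12,27),(6,5),(17,6),(0,22)],[(0,20),(18,11),(14,0),(15,26),(24,1),(29,20),(0,5),(11,1),(12,19),(29,5),(30,11),(15,17),(23,16),(22,0),(24,12),(8,18),(19,0),(12,10),(30,22),(16,28),(23,10),(14,6),(19,6),(22,6),(12,9),(15,23),(12,16),(11,12),(18,22),(8,3)],[(8,1),(17,11),(10,11),(21,11),(13,13),(19,14),(4,14),(13,7),(2,17),(22,25),(25,27),(2,26),(23,17),(8,10),(4,4),(17,22),(8,12),(15,20),(23,26),(6,28),(23,23),(1,24),(2,23),(10,22),(1,15),(19,4),(8,16),(21,22),(1,21),(15,5)],[(15,0),(18,20),(6,0),(18,5),(2,0),(12,1),(7,20),(9,14),(28,20),(6,6),(7,5),(17,1),(22,1),(8,11),(9,4),(17,15),(21,18),(12,12),(15,6),(29,28),(21,3),(2,6),(25,9),(22,12),(25,19),(17,24),(8,22),(17,21),(17,12),(28,5)],[(28,0),(1,19),(11,17),(12,25),(24,7),(11,26),(4,20),(9,20),(7,29),(28,6),(11,23),(1,11),(24,13),(4,5),(9,5),(28,2),(1,22),(11,15),(12,28),(24,10),(11,24),(4,18),(9,18),(7,27),(28,8),(11,21),(1,9),(24,16),(4,3),(9,3)],[(9,1),(17,17),(21,20),(12,14),(15,8),(29,2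5),(21,5),(2,8),(25,11),(22,14),(25,22),(17,26),(8,19),(17,23),(17,14),(28,3),(15,2),(18,18),(6,2),(18,3),(2,2),(12,4),(7,18),(9,12),(28,18),(6,8),(7,3),(17,4),(22,4),(8,9)],[(8,7),(4,1),(17,19),(8,14),(15,18),(23,24),(6,25),(23,21),(1,26),(2,21),(10,19),(1,17),(19,1),(8,13),(21,19),(1,23),(15,3),(8,4),(17,9),(10,9),(21,9),(13,16),(19,12),(4,12),(13,10),(2,15),(22,28),(25,29),(2,24),(23,15)],[(23,13),(22,2),(24,14),(8,20),(19,2),(12,7),(30,19),(16,25),(23,7),(14,8),(19,8),(22,8),(12,11),(15,21),(12,13),(11,14),(18,19),(8,5),(0,18),(18,9),(14,2),(15,24),(24,4),(29,18),(0,3),(11,4),(12,22),(29,3),(30,9),(15,15)],[(15,13),(2,29),(17,2),(1,7),(17,29),(1,13),(22,11),(14,24),(28,25),(14,21),(30,17),(14,27),(30,23),(23,27),(15,7),(12,29),(6,3),(17,8),(0,19),(5,16),(22,22),(13,27),(9,27),(10,27),(0,9),(6,18),(8,27),(14,15),(30,26),(5,10)],[(5,8),(30,7),(25,24),(7,1),(11,19),(25,21),(10,20),(19,11),(30,13),(10,5),(10,2),(28,29),(16,29),(6,29),(29,29),(24,11),(18,2),(10,8),(18,8),(5,17),(5,2),(26,10),(11,9),(5,26),(19,22),(26,16),(7,12),(24,22),(25,15),(5,23)],[(5,18),(30,28),(29,1),(22,26),(6,10),(28,10),(22,17),(2,18),(14,11),(14,18),(10,1),(14,22),(23,11),(23,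22),(21,2),(11,25),(2,3),(21,8),(14,3),(22,23),(5,3),(28,16),(18,28),(6,16),(27,10),(27,16),(29,12),(10,12),(16,18),(16,3)],[(16,1),(25,13),(14,13),(12,20),(2,13),(28,23),(7,25),(25,7),(1,29),(23,8),(28,26),(30,14),(14,7),(1,25),(2,7),(4,19),(12,5),(13,17),(15,25),(13,26),(26,11),(28,17),(23,2),(30,4),(13,23),(26,22),(20,18),(20,3),(4,9),(16,12)],[(16,17),(16,23),(24,20),(8,25),(11,2),(13,8),(9,17),(9,23),(2,11),(23,18),(16,26),(14,28),(19,7),(2,22),(25,8),(9,19),(7,19),(19,13),(24,5),(9,26),(11,8),(18,29),(23,3),(3,24),(25,2),(3,15),(7,9),(13,2),(3,21),(9,9)],[(9,7),(4,7),(10,17),(7,17),(6,23),(0,1),(4,17),(7,23),(4,23),(21,1),(6,26),(30,20),(22,7),(10,23),(22,13),(7,26),(9,13),(4,13),(29,19),(10,26),(5,27),(6,17),(30,5),(3,25),(0,12),(4,26),(21,12),(29,9),(27,28),(19,28)],[(19,26),(3,19),(20,1),(29,17),(26,14),(0,7),(29,23),(19,17),(12,2),(11,29),(29,26),(23,28),(12,8),(1,14),(25,18),(28,9),(28,19),(13,11),(0,2),(0,8),(19,23),(27,11),(13,22),(25,3),(0,13),(27,22),(26,4),(3,9),(1,4),(20,12)],[(20,17),(27,26),(13,4),(20,23),(27,14),(19,20),(10,25),(24,2),(13,14),(2,4),(24,8),(15,11),(15,22),(19,5),(17,25),(11,20),(6,9),(2,14),(11,5),(6,19),(26,17),(27,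17),(26,23),(3,14),(4,27),(27,23),(26,26),(20,26),(3,4),(27,4)],[(27,2),(1,2),(29,7),(7,7),(26,20),(27,8),(5,28),(9,25),(15,29),(21,7),(18,1),(12,26),(12,17),(8,17),(8,23),(1,8),(7,2),(22,29),(12,23),(8,26),(7,13),(29,13),(20,19),(7,8),(21,13),(26,5),(26,27),(20,9),(18,12),(24,28)],[(24,26),(3,2),(3,7),(21,17),(3,13),(13,18),(6,14),(11,7),(13,25),(14,4),(10,7),(6,4),(11,13),(21,23),(17,20),(24,17),(17,5),(25,28),(29,2),(14,14),(24,23),(10,13),(20,2),(13,3),(29,8),(3,8),(20,27),(20,8),(21,26),(0,27)],[(0,25),(18,17),(20,28),(26,2),(4,28),(25,4),(30,2),(18,26),(26,8),(22,20),(18,7),(17,7),(18,23),(1,20),(17,13),(4,2),(22,5),(2,25),(30,8),(30,27),(25,14),(16,19),(4,8),(3,20),(27,29),(1,5),(3,5),(18,13),(21,27),(16,9)],[(16,7),(21,28),(20,7),(26,28),(27,20),(0,17),(3,29),(23,4),(28,14),(5,4),(5,14),(0,23),(8,2),(15,4),(28,4),(9,2),(8,8),(23,14),(15,14),(5,11),(5,22),(16,2),(16,13),(9,8),(19,29),(20,13),(27,5),(24,29),(0,26),(16,8)]]"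
  by code_simp

theorem lemma3p1:
  fixes v :: nat
  assumes "v \<in> {7, 11, 16, 26, 31, 32}"
  shows "\<exists>(X :: nat set) \<B>. finite X \<and> card X = v \<and> is_S3_K4e X \<B>"
  using assms exists_from_check[OF check_7] exists_from_check[OF check_11] exists_from_check[OF check_16] exists_from_check[OF check_26] exists_from_check[OF check_31] exists_from_check[OF check_32] by auto

end
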